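(* For every positive integer $n$ there exists a positive integer $x$ such that the entry in row $x$, column $x-1$ of $T_2$ equals $n$. In particular every positive integer appears as an entry of $T_2$, and the sequence $a_2(n)=\min\{x\in\mathbb{N}: T_2(x,x-1)=n\}$ is defined for all positive integers $n$.
   Context: For a positive integer $m$, the triangle $T_m$ is an array whose row $x$ ($x=1,2,\dots$) has $x$ entries, in columns $0,\dots,x-1$. Row $1$ is the single entry $1$. For $x>1$, row $x$ is obtained from row $x-1$ by rotating it cyclically left by $m$ positions (the entry in column $c$ of row $x-1$ moves to column $(c-m)\bmod(x-1)\in\{0,\dots,x-2\}$ of row $x$), then appending in column $x-1$ a new entry equal to $1$ plus the entry in column $0$ of row $x-1$. $T_m(x,c)$ denotes the entry in row $x$, column $c$. Here $m=2$. *)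

theory Defs
  imports Main
begin

text \<open>Row x of the triangle T_m, as a list of length x (columns 0..x-1), for x \<ge> 1.
  T_row m (Suc k) is row k+1. Row 1 is [1]. Row x+1 is obtained from row x by
  rotating cyclically left by m positions (Isabelle's rotate is a left rotation:
  entry in column c moves to column (c - m) mod x) and appending 1 + (column 0 entry of row x).
  T_row m 0 is an unused dummy value.\<close>

fun T_row :: "nat \<Rightarrow> nat \<Rightarrow> nat list" where
  "T_row m 0 = []"
| "T_row m (Suc 0) = [1]"
| "T_row m (Suc (Suc k)) =
     rotate m (T_row m (Suc k)) @ [hd (T_row m (Suc k)) + 1]"

definition T :: "nat \<Rightarrow> nat \<Rightarrow> nat \<Rightarrow> nat" where
  "T m x c = T_row m x ! c"

end

theory Submission
  imports Defs
begin

abbreviation R where "R \<equiv> T_row 2"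

lemma len_R: "length (T_row m x) = x"
  by (induction m x rule: T_row.induct) auto

lemma rot2: "length xs \<ge> 2 \<Longrightarrow> rotate 2 xs = drop 2 xs @ take 2 xs"
proof -
  assume a: "length xs \<ge> 2"
  show ?thesis
  proof (cases "length xs = 2")
    case True
    then show ?thesis by simp
  next
    case False
    then have "2 mod length xs = 2" using a by simp
    then show ?thesis by (simp add: rotate_drop_take)
  qed
qed

lemma R_step: "x \<ge> 2 \<Longrightarrow> R (x+1) = drop 2 (R x) @ take 2 (R x) @ [hd (R x) + 1]"
proof -
  assume "x \<ge> 2"
  then obtain k where k: "x = Suc k" "k \<ge> 1" by (cases x) auto
  have "R (x+1) = rotate 2 (R x) @ [hd (R x) + 1]" using k by simp
  then show ?thesis using rot2[of "R x"] \<open>x \<ge> 2\<close> by (simp add: len_R)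
qed

lemma S1: "2 \<le> p \<Longrightarrow> p < x \<Longrightarrow> R (x+1) ! (p-2) = R x ! p"
proof -
  assume a: "2 \<le> p" "p < x"
  have e: "R (x+1) = drop 2 (R x) @ (take 2 (R x) @ [hd (R x) + 1])" using R_step a by simp
  have l: "p-2 < length (drop 2 (R x))" using a by (simp add: len_R)
  have "R (x+1) ! (p-2) = drop 2 (R x) ! (p-2)" unfolding e using l by (simp only: nth_append_left)
  also have "\<dots> = R x ! (2 + (p-2))" by (rule nth_drop) (use a in \<open>simp add: len_R\<close>)
  also have "2 + (p-2) = p" using a by simp
  finally show ?thesis .
qed

lemma S2: "2 \<le> x \<Longrightarrow> R (x+1) ! (x-1) = R x ! 1"
proof -
  assume a: "2 \<le> x"
  have e: "R (x+1) = drop 2 (R x) @ (take 2 (R x) @ [hd (R x) + 1])" using R_step a by simp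
  have l: "length (drop 2 (R x)) = x - 2" by (simp add: len_R)
  have i: "x - 1 = length (drop 2 (R x)) + 1" using l a by simp
  have "R (x+1) ! (x-1) = (take 2 (R x) @ [hd (R x) + 1]) ! 1"
    unfolding e i by (rule nth_append_length_plus)
  also have "\<dots> = take 2 (R x) ! 1" using a by (simp add: len_R nth_append)
  also have "\<dots> = R x ! 1" by simp
  finally show ?thesis .
qed

lemma R_last: "x \<ge> 1 \<Longrightarrow> R (x+1) ! x = hd (R x) + 1"
proof -
  assume "x \<ge> 1"
  then obtain k where k: "x = Suc k" by (cases x) auto
  show ?thesis
  proof (cases k)
    case 0 then show ?thesis using k by simp
  next
    case (Suc j)
    then show ?thesis using k by (simp add: nth_append len_R)
  qed
qed

lemma L1: "p + 2*k < x \<Longrightarrow> R (x+k) ! p = R x ! (p+2*k)"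
proof (induction k arbitrary: x)
  case 0 then show ?case by simp
next
  case (Suc k)
  have "R ((x+1)+k) ! p = R (x+1) ! (p+2*k)" using Suc.IH[of "x+1"] Suc.prems by simp
  moreover have "R (x+1) ! (p+2*k) = R x ! (p+2*k+2)" using S1[of "p+2*k+2" x] Suc.prems by simp
  ultimately show ?case by (simp add: algebra_simps)
qed

lemma hd0: "x \<ge> 1 \<Longrightarrow> hd (R x) = R x ! 0"
  using len_R[of 2 x] by (cases "R x") auto

lemma even_case: "p < x \<Longrightarrow> even p \<Longrightarrow> \<exists>y\<ge>1. hd (R y) = R x ! p"
proof -
  assume a: "p < x" "even p"
  then obtain k where k: "p = 2*k" by auto
  have "R (x+k) ! 0 = R x ! p" using L1[of 0 k x] a k by simp
  then show ?thesis using hd0[of "x+k"] a by (intro exI[of _ "x+k"]) auto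
qed

lemma L2: "\<not> 2^(Suc n) dvd X \<Longrightarrow> X \<ge> 2 \<Longrightarrow> \<exists>y\<ge>1. hd (R y) = R X ! 1"
proof (induction n arbitrary: X)
  case 0
  then have "odd X" by simp
  moreover have "X = Suc (X - 1)" using 0 by simp
  ultimately have ev: "even (X - 1)" by (metis even_Suc)
  have "R (X+1) ! (X-1) = R X ! 1" using S2 0 by simp
  then show ?case using even_case[of "X-1" "X+1"] ev 0 by simp
next
  case (Suc n)
  show ?case
  proof (cases "odd X")
    case True
    moreover have "X = Suc (X - 1)" using Suc.prems by simp
    ultimately have ev: "even (X - 1)" by (metis even_Suc)
    have "R (X+1) ! (X-1) = R X ! 1" using S2 Suc.prems by simp
    then show ?thesis using even_case[of "X-1" "X+1"] ev Suc.prems by simp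
  next
    case False
    define j where "j = X div 2 - 1"
    have "X = 2*(X div 2)" using False by simp
    moreover have "X div 2 \<ge> 1" using Suc.prems(2) by simp
    ultimately have X: "X = 2*j+2" unfolding j_def by linarith
    have a1: "R (X+1) ! (X-1) = R X ! 1" using S2 Suc.prems by simp
    have a2: "R (X+1+j) ! 1 = R (X+1) ! (1 + 2*j)" using L1[of 1 j "X+1"] X by simp
    have X2: "X - 1 = 1 + 2*j" using X by simp
    define X' where "X' = X+1+j"
    have "\<not> 2^(Suc n) dvd X'"
    proof
      assume "2^(Suc n) dvd X'"
      moreover have "X' = 3*(j+1)" unfolding X'_def using X by simp
      ultimately have "2^(Suc n) dvd 3*(j+1)" by simp
      moreover have "coprime ((2::nat)^(Suc n)) 3" by simp
      ultimately have "2^(Suc n) dvd (j+1)" using coprime_dvd_mult_right_iff by blast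
      then obtain c where c: "j+1 = 2^(Suc n) * c" by (rule dvdE)
      have "X = 2^(Suc (Suc n)) * c" using X c by simp
      then have "2^(Suc (Suc n)) dvd X" by simp
      then show False using Suc.prems(1) by simp
    qed
    then obtain y where "y\<ge>1" "hd (R y) = R X' ! 1" using Suc.IH[of X'] X'_def X by auto
    then show ?thesis using a1 a2 X2 X'_def by auto
  qed
qed

lemma G: "p < x \<Longrightarrow> \<exists>y\<ge>1. hd (R y) = R x ! p"
proof (cases "even p")
  case True
  assume "p < x" then show ?thesis using even_case True by blast
next
  case False
  assume a: "p < x"
  then obtain k where k: "p = 2*k+1" using False oddE by blast
  have b: "R (x+k) ! 1 = R x ! p" using L1[of 1 k x] a k by simp
  have "\<not> 2^(Suc (x+k)) dvd (x+k)"
  proof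
    assume "2^(Suc (x+k)) dvd (x+k)"
    moreover have "x+k < 2^(Suc (x+k))"
    proof -
      have h: "x+k < 2^(x+k)" by (rule less_exp)
      have "(2::nat)^(x+k) < 2^(Suc(x+k))" by simp
      then show ?thesis using h by linarith
    qed
    moreover have "x+k > 0" using a k by simp
    ultimately show False using nat_dvd_not_less by blast
  qed
  then show ?thesis using L2[of "x+k" "x+k"] a k b by auto
qed

lemma heads: "v \<ge> 1 \<Longrightarrow> \<exists>y\<ge>1. hd (R y) = v"
proof (induction v rule: nat_induct_at_least)
  case base
  show ?case by (intro exI[of _ 1]) simp
next
  case (Suc v)
  then obtain y where y: "y \<ge> 1" "hd (R y) = v" by auto
  have "R (y+1) ! y = Suc v" using R_last y by simp
  then show ?case using G[of y "y+1"] by auto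
qed

theorem mainTheorem6:
  fixes n :: nat
  assumes "n \<ge> 1"
  shows "\<exists>x::nat. x \<ge> 1 \<and> T 2 x (x - 1) = n"
proof (cases "n = 1")
  case True
  then show ?thesis by (intro exI[of _ 1]) (simp add: T_def)
next
  case False
  have "n - 1 \<ge> 1" using False assms by simp
  then obtain y where y: "y \<ge> 1" "hd (R y) = n - 1" using heads[of "n-1"] by blast
  have "R (y+1) ! y = n" using R_last y False assms by simp
  then show ?thesis by (intro exI[of _ "y+1"]) (simp add: T_def)
qed

end
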